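(* Consider the weighted-median opinion dynamics on a row-stochastic influence matrix $W$ with node set $V=\{1,\dots,n\}$. Suppose the only nonempty maximal cohesive set is $V$ itself. Then for every initial condition $x(0)\in\mathbb R^n$, the solution $x(t)$ almost surely converges (in finite time) to a consensus equilibrium, i.e. a vector with all entries equal.
   Context: A matrix $W=(w_{ij})_{n\times n}$ is row-stochastic if $w_{ij}\ge 0$ for all $i,j$ and $\sum_{j=1}^n w_{ij}=1$ for every $i$. A set $M\subseteq V$ is cohesive if $\sum_{j\in M} w_{ij}\ge 1/2$ for every $i\in M$. A cohesive set $M$ is maximal cohesive if there is no $i\in V\setminus M$ with $\sum_{j\in M} w_{ij}>1/2$. A weighted median of $x\in\mathbb R^n$ with respect to row $i$ of $W$ is any $y\in\{x_1,\dots,x_n\}$ satisfying $\sum_{j:\,x_j<y}w_{ij}\le 1/2$ and $\sum_{j:\,x_j>y}w_{ij}\le 1/2$. $\mathrm{Med}_i(x;W)$ denotes this weighted median when it is unique. When it is not unique, $\mathrm{Med}_i(x;W)$ denotes the weighted median closest to $x_i$, which is then uniquely determined. Weighted-median opinion dynamics: given $x(0)\in\mathbb R^n$, at each time step $t+1$ ($t=0,1,2,\dots$) an index $i$ is drawn uniformly at random from $\{1,\dots,n\}$, independently of the past. Then $x_i(t+1)=\mathrm{Med}_i(x(t);W)$ and $x_j(t+1)=x_j(t)$ for $j\ne i$. *)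

theory Defs
  imports "HOL-Probability.Probability"
begin

text \<open>Nodes are the elements of a finite type 'n (so V = UNIV); W i j is the weight w_ij.\<close>

definition row_stochastic :: "('n::finite \<Rightarrow> 'n \<Rightarrow> real) \<Rightarrow> bool" where
  "row_stochastic W \<longleftrightarrow> (\<forall>i j. W i j \<ge> 0) \<and> (\<forall>i. (\<Sum>j\<in>UNIV. W i j) = 1)"

definition cohesive :: "('n::finite \<Rightarrow> 'n \<Rightarrow> real) \<Rightarrow> 'n set \<Rightarrow> bool" where
  "cohesive W M \<longleftrightarrow> (\<forall>i\<in>M. (\<Sum>j\<in>M. W i j) \<ge> 1/2)"

definition maximal_cohesive :: "('n::finite \<Rightarrow> 'n \<Rightarrow> real) \<Rightarrow> 'n set \<Rightarrow> bool" where
  "maximal_cohesive W M \<longleftrightarrow> cohesive W M \<and> \<not> (\<exists>i\<in>UNIV - M. (\<Sum>j\<in>M. W i j) > 1/2)"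

definition wmedians :: "('n::finite \<Rightarrow> 'n \<Rightarrow> real) \<Rightarrow> ('n \<Rightarrow> real) \<Rightarrow> 'n \<Rightarrow> real set" where
  "wmedians W x i = {y \<in> range x. (\<Sum>j | x j < y. W i j) \<le> 1/2 \<and> (\<Sum>j | x j > y. W i j) \<le> 1/2}"

text \<open>Med_i(x;W): the weighted median closest to x_i (equals the unique one when unique).\<close>
definition Med :: "('n::finite \<Rightarrow> 'n \<Rightarrow> real) \<Rightarrow> ('n \<Rightarrow> real) \<Rightarrow> 'n \<Rightarrow> real" where
  "Med W x i = (THE y. y \<in> wmedians W x i \<and> (\<forall>z\<in>wmedians W x i. \<bar>y - x i\<bar> \<le> \<bar>z - x i\<bar>))"

text \<open>Trajectory of the dynamics along a sequence of drawn indices \<omega> (\<omega> !! t is drawn at step t+1).\<close>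
fun traj :: "('n::finite \<Rightarrow> 'n \<Rightarrow> real) \<Rightarrow> ('n \<Rightarrow> real) \<Rightarrow> 'n stream \<Rightarrow> nat \<Rightarrow> ('n \<Rightarrow> real)" where
  "traj W x0 \<omega> 0 = x0"
| "traj W x0 \<omega> (Suc t) = (let x = traj W x0 \<omega> t; i = \<omega> !! t in x(i := Med W x i))"

definition index_space :: "'n::finite stream measure" where
  "index_space = stream_space (measure_pmf (pmf_of_set (UNIV :: 'n set)))"

end

theory Submission
  imports Defs
begin


lemma sum_split_pred:
  fixes f :: "'n::finite \<Rightarrow> real"
  shows "sum f {j. P j} + sum f {j. \<not> P j} = sum f UNIV"
proof -
  have "sum f UNIV = sum f ({j. P j} \<union> {j. \<not> P j})" by (rule sum.cong) auto
  also have "\<dots> = sum f {j. P j} + sum f {j. \<not> P j}"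
    by (rule sum.union_disjoint) auto
  finally show ?thesis by simp
qed

lemma sum_le_mono:
  fixes W :: "'n::finite \<Rightarrow> 'n \<Rightarrow> real"
  assumes "row_stochastic W" "A \<subseteq> B"
  shows "(\<Sum>j\<in>A. W i j) \<le> (\<Sum>j\<in>B. W i j)"
  using assms by (intro sum_mono2) (auto simp: row_stochastic_def)

lemma wmedians_range: "wmedians W x i \<subseteq> range x"
  unfolding wmedians_def by auto

lemma wmedians_ne:
  fixes W :: "'n::finite \<Rightarrow> 'n \<Rightarrow> real"
  assumes rs: "row_stochastic W"
  shows "wmedians W x i \<noteq> {}"
proof -
  define V where "V = range x"
  define C where "C = {v\<in>V. (\<Sum>j | x j \<le> v. W i j) \<ge> 1/2}"
  have finV: "finite V" unfolding V_def by simp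
  have "Max V \<in> C"
  proof -
    have "{j. x j \<le> Max V} = UNIV" using finV by (auto simp: V_def)
    then show ?thesis using rs finV by (auto simp: C_def row_stochastic_def V_def)
  qed
  then have Cne: "C \<noteq> {}" and finC: "finite C" using finV by (auto simp: C_def)
  define y where "y = Min C"
  have yC: "y \<in> C" using Cne finC by (simp add: y_def)
  have gt: "(\<Sum>j | x j > y. W i j) \<le> 1/2"
  proof -
    have "(\<Sum>j | x j \<le> y. W i j) + (\<Sum>j | \<not> x j \<le> y. W i j) = 1"
      using sum_split_pred[of "W i" "\<lambda>j. x j \<le> y"] rs by (simp add: row_stochastic_def)
    moreover have "{j. \<not> x j \<le> y} = {j. x j > y}" by auto
    ultimately show ?thesis using yC by (auto simp: C_def)
  qed
  have lt: "(\<Sum>j | x j < y. W i j) \<le> 1/2"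
  proof (rule ccontr)
    assume A: "\<not> ?thesis"
    then have "{j. x j < y} \<noteq> {}" by (cases "{j. x j < y} = {}") auto
    define D where "D = {v\<in>V. v < y}"
    have Dne: "D \<noteq> {}" using \<open>{j. x j < y} \<noteq> {}\<close> by (auto simp: D_def V_def)
    have finD: "finite D" using finV by (simp add: D_def)
    define v where "v = Max D"
    have vD: "v \<in> D" using Dne finD by (simp add: v_def)
    have eq: "{j. x j \<le> v} = {j. x j < y}"
    proof
      show "{j. x j \<le> v} \<subseteq> {j. x j < y}" using vD by (auto simp: D_def)
      show "{j. x j < y} \<subseteq> {j. x j \<le> v}"
      proof
        fix j assume "j \<in> {j. x j < y}"
        then have "x j \<in> D" by (auto simp: D_def V_def)
        then show "j \<in> {j. x j \<le> v}" using finD by (simp add: v_def)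
      qed
    qed
    have "v \<in> C" using A eq vD by (auto simp: C_def D_def)
    then have "y \<le> v" using finC by (simp add: y_def)
    then show False using vD by (auto simp: D_def)
  qed
  have "y \<in> range x" using yC by (auto simp: C_def V_def)
  then have "y \<in> wmedians W x i" using lt gt by (simp add: wmedians_def)
  then show ?thesis by auto
qed

lemma Med_in:
  fixes W :: "'n::finite \<Rightarrow> 'n \<Rightarrow> real"
  assumes rs: "row_stochastic W"
  shows "Med W x i \<in> wmedians W x i"
proof -
  let ?M = "wmedians W x i"
  have fin: "finite ?M" using wmedians_range[of W x i] by (rule finite_subset) simp
  have ne: "?M \<noteq> {}" using wmedians_ne[OF rs] .
  define d where "d = Min ((\<lambda>z. \<bar>z - x i\<bar>) ` ?M)"
  have "d \<in> (\<lambda>z. \<bar>z - x i\<bar>) ` ?M" using fin ne by (simp add: d_def)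
  then obtain y where yM: "y \<in> ?M" and yd: "\<bar>y - x i\<bar> = d" by auto
  have dmin: "\<forall>z\<in>?M. d \<le> \<bar>z - x i\<bar>" using fin by (simp add: d_def)
  have ex: "\<exists>!y. y \<in> ?M \<and> (\<forall>z\<in>?M. \<bar>y - x i\<bar> \<le> \<bar>z - x i\<bar>)"
  proof (rule ex1I[of _ y])
    show "y \<in> ?M \<and> (\<forall>z\<in>?M. \<bar>y - x i\<bar> \<le> \<bar>z - x i\<bar>)" using yM yd dmin by auto
  next
    fix y2 assume A: "y2 \<in> ?M \<and> (\<forall>z\<in>?M. \<bar>y2 - x i\<bar> \<le> \<bar>z - x i\<bar>)"
    have eqd: "\<bar>y2 - x i\<bar> = d" using A yM yd dmin by force
    show "y2 = y"
    proof (rule ccontr)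
      assume ne2: "y2 \<noteq> y"
      then have dpos: "d > 0" using eqd yd by auto
      define lo where "lo = min y y2"
      define hi where "hi = max y y2"
      have lohi: "lo < x i" "x i < hi" "lo \<in> ?M" "hi \<in> ?M"
        using eqd yd ne2 dpos yM A by (auto simp: lo_def hi_def min_def max_def abs_if split: if_splits)
      have "x i \<in> ?M"
      proof -
        have "(\<Sum>j | x j < x i. W i j) \<le> (\<Sum>j | x j < hi. W i j)"
          using lohi by (intro sum_le_mono[OF rs]) auto
        also have "\<dots> \<le> 1/2" using lohi(4) by (simp add: wmedians_def)
        finally have 1: "(\<Sum>j | x j < x i. W i j) \<le> 1/2" .
        have "(\<Sum>j | x j > x i. W i j) \<le> (\<Sum>j | x j > lo. W i j)"
          using lohi by (intro sum_le_mono[OF rs]) auto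
        also have "\<dots> \<le> 1/2" using lohi(3) by (simp add: wmedians_def)
        finally show ?thesis using 1 by (simp add: wmedians_def)
      qed
      then have "d \<le> 0" using dmin by force
      then show False using dpos by simp
    qed
  qed
  show ?thesis unfolding Med_def using theI'[OF ex] by blast
qed

lemma Med_range:
  fixes W :: "'n::finite \<Rightarrow> 'n \<Rightarrow> real"
  assumes rs: "row_stochastic W"
  shows "Med W x i \<in> range x"
  using Med_in[OF rs] wmedians_range by blast


definition upd :: "('n::finite \<Rightarrow> 'n \<Rightarrow> real) \<Rightarrow> ('n \<Rightarrow> real) \<Rightarrow> 'n \<Rightarrow> ('n \<Rightarrow> real)" where
  "upd W x i = x(i := Med W x i)"

fun run :: "('n::finite \<Rightarrow> 'n \<Rightarrow> real) \<Rightarrow> ('n \<Rightarrow> real) \<Rightarrow> 'n list \<Rightarrow> ('n \<Rightarrow> real)" where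
  "run W x [] = x"
| "run W x (i # is) = run W (upd W x i) is"

definition cons :: "('n \<Rightarrow> real) \<Rightarrow> bool" where
  "cons x \<longleftrightarrow> (\<exists>c. \<forall>i. x i = c)"

lemma run_append: "run W x (us @ vs) = run W (run W x us) vs"
  by (induction us arbitrary: x) auto

lemma upd_cons:
  fixes W :: "'n::finite \<Rightarrow> 'n \<Rightarrow> real"
  assumes rs: "row_stochastic W" and c: "cons x"
  shows "upd W x i = x"
proof -
  obtain c where xc: "\<forall>j. x j = c" using c by (auto simp: cons_def)
  have "Med W x i \<in> range x" by (rule Med_range[OF rs])
  then have "Med W x i = x i" using xc by auto
  then show ?thesis by (simp add: upd_def)
qed

lemma run_cons:
  fixes W :: "'n::finite \<Rightarrow> 'n \<Rightarrow> real"
  assumes rs: "row_stochastic W" and c: "cons x"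
  shows "run W x ws = x"
  using c by (induction ws arbitrary: x) (auto simp: upd_cons[OF rs])

lemma range_upd:
  fixes W :: "'n::finite \<Rightarrow> 'n \<Rightarrow> real"
  assumes rs: "row_stochastic W"
  shows "range (upd W x i) \<subseteq> range x"
  using Med_range[OF rs, of x i] by (auto simp: upd_def)

lemma shrink:
  fixes W :: "'n::finite \<Rightarrow> 'n \<Rightarrow> real"
  assumes rs: "row_stochastic W" and "\<forall>j. x j \<le> a"
  shows "\<exists>ws. range (run W x ws) \<subseteq> range x \<and> (\<forall>j. run W x ws j \<le> a) \<and>
     ({j. run W x ws j = a} = {} \<or> cohesive W {j. run W x ws j = a})"
  using assms(2)
proof (induction "card {j. x j = a}" arbitrary: x rule: less_induct)
  case less
  let ?S = "{j. x j = a}"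
  show ?case
  proof (cases "?S = {} \<or> cohesive W ?S")
    case True then show ?thesis using less.prems by (intro exI[of _ "[]"]) auto
  next
    case False
    then obtain i where iS: "x i = a" and lt: "(\<Sum>j\<in>?S. W i j) < 1/2"
      unfolding cohesive_def by force
    define x1 where "x1 = upd W x i"
    have med: "Med W x i \<in> wmedians W x i" using Med_in[OF rs] .
    have ne: "Med W x i \<noteq> a"
    proof
      assume "Med W x i = a"
      then have le: "(\<Sum>j | x j < a. W i j) \<le> 1/2" using med by (simp add: wmedians_def)
      have "(\<Sum>j | x j < a. W i j) + (\<Sum>j | \<not> x j < a. W i j) = 1"
        using sum_split_pred[of "W i" "\<lambda>j. x j < a"] rs by (simp add: row_stochastic_def)
      moreover have "{j. \<not> x j < a} = ?S"
      proof (rule set_eqI)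
        fix j show "j \<in> {j. \<not> x j < a} \<longleftrightarrow> j \<in> ?S" using less.prems[rule_format, of j] by auto
      qed
      ultimately show False using le lt by simp
    qed
    have rng: "range x1 \<subseteq> range x" unfolding x1_def by (rule range_upd[OF rs])
    have le: "\<forall>j. x1 j \<le> a"
    proof
      fix j
      have "x1 j \<in> range x" using rng by blast
      then obtain k where "x1 j = x k" by blast
      then show "x1 j \<le> a" using less.prems by simp
    qed
    have sub: "{j. x1 j = a} = ?S - {i}" using ne by (auto simp: x1_def upd_def)
    have "card (?S - {i}) < card ?S" using iS by (intro card_Diff1_less) auto
    then obtain ws where ws: "range (run W x1 ws) \<subseteq> range x1 \<and> (\<forall>j. run W x1 ws j \<le> a) \<and>
     ({j. run W x1 ws j = a} = {} \<or> cohesive W {j. run W x1 ws j = a})"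
      using less.hyps[of x1] le sub by auto
    show ?thesis
    proof (rule exI[of _ "i # ws"])
      have "run W x (i # ws) = run W x1 ws" by (simp add: x1_def)
      then show "range (run W x (i # ws)) \<subseteq> range x \<and> (\<forall>j. run W x (i # ws) j \<le> a) \<and>
     ({j. run W x (i # ws) j = a} = {} \<or> cohesive W {j. run W x (i # ws) j = a})"
        using ws rng by (metis subset_trans)
    qed
  qed
qed

lemma grow:
  fixes W :: "'n::finite \<Rightarrow> 'n \<Rightarrow> real"
  assumes rs: "row_stochastic W"
    and hyp: "\<forall>M. M \<noteq> {} \<and> maximal_cohesive W M \<longrightarrow> M = UNIV"
    and "\<forall>j. x j \<le> a" "{j. x j = a} \<noteq> {}" "cohesive W {j. x j = a}"
  shows "\<exists>ws. cons (run W x ws)"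
  using assms(3-5)
proof (induction "card {j. x j \<noteq> a}" arbitrary: x rule: less_induct)
  case less
  let ?S = "{j. x j = a}"
  have xle: "\<And>j. x j \<le> a" using less.prems(1) by blast
  have Sne: "?S \<noteq> {}" using less.prems(2) .
  have Scoh: "cohesive W ?S" using less.prems(3) .
  show ?case
  proof (cases "maximal_cohesive W ?S")
    case True
    have "?S = UNIV" using hyp[rule_format, of ?S] True Sne by blast
    then have "cons x" unfolding cons_def by blast
    then show ?thesis by (intro exI[of _ "[]"]) simp
  next
    case False
    then obtain i where iS: "x i \<noteq> a" and gt: "(\<Sum>j\<in>?S. W i j) > 1/2"
      using Scoh unfolding maximal_cohesive_def by blast
    define x1 where "x1 = upd W x i"
    have med: "Med W x i \<in> wmedians W x i" using Med_in[OF rs] .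
    have meda: "Med W x i = a"
    proof (rule ccontr)
      assume ne: "Med W x i \<noteq> a"
      have "Med W x i \<in> range x" using med wmedians_range by blast
      then obtain k where k: "Med W x i = x k" by blast
      have mlt: "Med W x i < a" using ne xle[of k] k by linarith
      have "?S \<subseteq> {j. x j > Med W x i}" using mlt by auto
      then have "(\<Sum>j\<in>?S. W i j) \<le> (\<Sum>j | x j > Med W x i. W i j)"
        by (rule sum_le_mono[OF rs])
      moreover have "(\<Sum>j | x j > Med W x i. W i j) \<le> 1/2" using med by (simp add: wmedians_def)
      ultimately show False using gt by simp
    qed
    have x1i: "x1 i = a" using meda by (simp add: x1_def upd_def)
    have x1o: "\<And>j. j \<noteq> i \<Longrightarrow> x1 j = x j" by (simp add: x1_def upd_def)
    have S1: "{j. x1 j = a} = insert i ?S"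
    proof (rule set_eqI)
      fix j show "j \<in> {j. x1 j = a} \<longleftrightarrow> j \<in> insert i ?S" using x1i x1o[of j] by (cases "j = i") auto
    qed
    have N1: "{j. x1 j \<noteq> a} = {j. x j \<noteq> a} - {i}"
    proof (rule set_eqI)
      fix j show "j \<in> {j. x1 j \<noteq> a} \<longleftrightarrow> j \<in> {j. x j \<noteq> a} - {i}" using x1i x1o[of j] by (cases "j = i") auto
    qed
    have le: "\<forall>j. x1 j \<le> a"
    proof
      fix j show "x1 j \<le> a" using x1i x1o[of j] xle[of j] by (cases "j = i") auto
    qed
    have coh: "cohesive W (insert i ?S)"
      unfolding cohesive_def
    proof
      fix j assume j: "j \<in> insert i ?S"
      have "(\<Sum>k\<in>?S. W j k) \<le> (\<Sum>k\<in>insert i ?S. W j k)" by (rule sum_le_mono[OF rs]) auto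
      moreover have "(\<Sum>k\<in>?S. W j k) \<ge> 1/2"
      proof (cases "j = i")
        case True then show ?thesis using gt by simp
      next
        case False then have "j \<in> ?S" using j by blast
        then show ?thesis using Scoh unfolding cohesive_def by blast
      qed
      ultimately show "(\<Sum>k\<in>insert i ?S. W j k) \<ge> 1/2" by simp
    qed
    have "card ({j. x j \<noteq> a} - {i}) < card {j. x j \<noteq> a}" using iS by (intro card_Diff1_less) auto
    then have lt: "card {j. x1 j \<noteq> a} < card {j. x j \<noteq> a}" using N1 by simp
    have "{j. x1 j = a} \<noteq> {}" using S1 by blast
    moreover have "cohesive W {j. x1 j = a}" using S1 coh by simp
    ultimately obtain ws where "cons (run W x1 ws)"
      using less.hyps[OF lt le] by blast
    then show ?thesis by (intro exI[of _ "i # ws"]) (simp add: x1_def)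
  qed
qed

lemma reach:
  fixes W :: "'n::finite \<Rightarrow> 'n \<Rightarrow> real"
  assumes rs: "row_stochastic W"
    and hyp: "\<forall>M. M \<noteq> {} \<and> maximal_cohesive W M \<longrightarrow> M = UNIV"
  shows "\<exists>ws. cons (run W x ws)"
proof (induction "card (range x)" arbitrary: x rule: less_induct)
  case less
  define a where "a = Max (range x)"
  have ale: "\<forall>j. x j \<le> a" by (auto simp: a_def)
  have ain: "a \<in> range x" unfolding a_def by (rule Max_in) auto
  obtain ws1 where ws1: "range (run W x ws1) \<subseteq> range x \<and> (\<forall>j. run W x ws1 j \<le> a) \<and>
     ({j. run W x ws1 j = a} = {} \<or> cohesive W {j. run W x ws1 j = a})"
    using shrink[OF rs ale] by blast
  define x' where "x' = run W x ws1"
  show ?case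
  proof (cases "{j. x' j = a} = {}")
    case True
    then have "range x' \<subseteq> range x - {a}" using ws1 by (auto simp: x'_def)
    then have "range x' \<subset> range x" using ain by auto
    then have "card (range x') < card (range x)" by (intro psubset_card_mono) auto
    then obtain ws2 where "cons (run W x' ws2)" using less.hyps by blast
    then show ?thesis by (intro exI[of _ "ws1 @ ws2"]) (simp add: run_append x'_def)
  next
    case False
    then obtain ws2 where "cons (run W x' ws2)"
      using grow[OF rs hyp, of x' a] ws1 by (auto simp: x'_def)
    then show ?thesis by (intro exI[of _ "ws1 @ ws2"]) (simp add: run_append x'_def)
  qed
qed

lemma universal:
  fixes W :: "'n::finite \<Rightarrow> 'n \<Rightarrow> real"
  assumes rs: "row_stochastic W"
    and hyp: "\<forall>M. M \<noteq> {} \<and> maximal_cohesive W M \<longrightarrow> M = UNIV"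
    and fin: "finite X"
  shows "\<exists>U. \<forall>x\<in>X. cons (run W x U)"
  using fin
proof (induction X rule: finite_induct)
  case empty then show ?case by auto
next
  case (insert x X)
  then obtain U where U: "\<forall>z\<in>X. cons (run W z U)" by blast
  obtain ws where ws: "cons (run W (run W x U) ws)" using reach[OF rs hyp] by blast
  show ?case
  proof (intro exI[of _ "U @ ws"] ballI)
    fix z assume "z \<in> insert x X"
    then show "cons (run W z (U @ ws))" using U ws by (auto simp: run_append run_cons[OF rs])
  qed
qed

lemma traj_run: "traj W x0 \<omega> (t + k) = run W (traj W x0 \<omega> t) (stake k (sdrop t \<omega>))"
proof (induction k arbitrary: t)
  case 0 then show ?case by simp
next
  case (Suc k)
  have "traj W x0 \<omega> (t + Suc k) = traj W x0 \<omega> (Suc t + k)" by simp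
  also have "\<dots> = run W (traj W x0 \<omega> (Suc t)) (stake k (sdrop (Suc t) \<omega>))" by (rule Suc.IH)
  also have "\<dots> = run W (traj W x0 \<omega> t) (stake (Suc k) (sdrop t \<omega>))"
    by (simp add: upd_def Let_def)
  finally show ?case .
qed

lemma traj_range:
  fixes W :: "'n::finite \<Rightarrow> 'n \<Rightarrow> real"
  assumes rs: "row_stochastic W"
  shows "range (traj W x0 \<omega> t) \<subseteq> range x0"
proof (induction t)
  case 0 then show ?case by simp
next
  case (Suc t)
  have "range (traj W x0 \<omega> (Suc t)) \<subseteq> range (traj W x0 \<omega> t)"
    using range_upd[OF rs, of "traj W x0 \<omega> t" "\<omega> !! t"] by (simp add: upd_def Let_def)
  then show ?case using Suc by blast
qed

lemma finite_states:
  assumes "finite R"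
  shows "finite {x :: 'n::finite \<Rightarrow> real. range x \<subseteq> R}"
proof -
  have "{x :: 'n \<Rightarrow> real. range x \<subseteq> R} = Pi\<^sub>E UNIV (\<lambda>_. R)"
    by (auto simp: PiE_UNIV_domain)
  then show ?thesis using assms by (simp add: finite_PiE)
qed



lemma S_prob: "prob_space (index_space :: 'n::finite stream measure)"
  unfolding index_space_def by (rule prob_space.prob_space_stream_space[OF prob_space_measure_pmf])

lemma space_S[simp]: "space (index_space :: 'n::finite stream measure) = UNIV"
  by (simp add: index_space_def space_stream_space)

lemma stake_meas:
  "{\<omega>\<in>space (index_space :: 'n::finite stream measure). stake L \<omega> \<in> A \<and> sdrop L \<omega> \<in> F} \<in> sets index_space"
  if "F \<in> sets (index_space :: 'n::finite stream measure)"
  using that unfolding index_space_def by measurable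

lemma prod_lemma:
  fixes A :: "'n::finite list set"
  assumes F: "F \<in> sets (index_space :: 'n stream measure)"
  shows "emeasure index_space {\<omega>\<in>space index_space. stake L \<omega> \<in> A \<and> sdrop L \<omega> \<in> F}
    = emeasure index_space {\<omega>\<in>space index_space. stake L \<omega> \<in> A \<and> sdrop L \<omega> \<in> UNIV} * emeasure (index_space :: 'n stream measure) F"
proof (induction L arbitrary: A)
  case 0
  have "emeasure (index_space :: 'n stream measure) UNIV = 1" using prob_space.emeasure_space_1[OF S_prob] by simp
  then show ?case by (cases "[] \<in> A") auto
next
  case (Suc L)
  let ?M = "measure_pmf (pmf_of_set (UNIV :: 'n set))"
  have e: "emeasure index_space X = (\<integral>\<^sup>+t. emeasure index_space {x\<in>space index_space. t ## x \<in> X} \<partial>?M)"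
    if "X \<in> sets index_space" for X :: "'n stream set"
    using that unfolding index_space_def by (rule prob_space.emeasure_stream_space[OF prob_space_measure_pmf])
  have sl: "\<And>t x G. {x\<in>space index_space. t ## x \<in> {\<omega>\<in>space index_space. stake (Suc L) \<omega> \<in> A \<and> sdrop (Suc L) \<omega> \<in> G}}
      = {x\<in>space index_space. stake L x \<in> (\<lambda>l. t # l) -` A \<and> sdrop L x \<in> G}"
    by auto
  have "emeasure index_space {\<omega>\<in>space index_space. stake (Suc L) \<omega> \<in> A \<and> sdrop (Suc L) \<omega> \<in> F}
      = (\<integral>\<^sup>+t. emeasure index_space {x\<in>space index_space. stake L x \<in> (\<lambda>l. t # l) -` A \<and> sdrop L x \<in> F} \<partial>?M)"
    by (subst e) (auto intro: stake_meas F simp only: sl)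
  also have "\<dots> = (\<integral>\<^sup>+t. emeasure index_space {x\<in>space index_space. stake L x \<in> (\<lambda>l. t # l) -` A \<and> sdrop L x \<in> UNIV} * emeasure index_space F \<partial>?M)"
    by (simp only: Suc.IH)
  also have "\<dots> = (\<integral>\<^sup>+t. emeasure index_space {x\<in>space index_space. stake L x \<in> (\<lambda>l. t # l) -` A \<and> sdrop L x \<in> UNIV} \<partial>?M) * emeasure index_space F"
    by (rule nn_integral_multc) simp
  also have "(\<integral>\<^sup>+t. emeasure index_space {x\<in>space index_space. stake L x \<in> (\<lambda>l. t # l) -` A \<and> sdrop L x \<in> UNIV} \<partial>?M)
     = emeasure index_space {\<omega>\<in>space index_space. stake (Suc L) \<omega> \<in> A \<and> sdrop (Suc L) \<omega> \<in> UNIV}"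
  proof -
    have "emeasure index_space {\<omega>\<in>space index_space. stake (Suc L) \<omega> \<in> A \<and> sdrop (Suc L) \<omega> \<in> UNIV}
      = (\<integral>\<^sup>+t. emeasure index_space {x\<in>space index_space. t ## x \<in> {\<omega>\<in>space index_space. stake (Suc L) \<omega> \<in> A \<and> sdrop (Suc L) \<omega> \<in> UNIV}} \<partial>?M)"
      by (rule e, rule stake_meas, metis sets.top space_S)
    then show ?thesis by (simp only: sl)
  qed
  finally show ?case .
qed


lemma e_lemma:
  fixes X :: "'n::finite stream set"
  assumes "X \<in> sets index_space"
  shows "emeasure index_space X = (\<integral>\<^sup>+t. emeasure index_space {x\<in>space index_space. t ## x \<in> X} \<partial>measure_pmf (pmf_of_set (UNIV :: 'n set)))"
  using assms unfolding index_space_def by (rule prob_space.emeasure_stream_space[OF prob_space_measure_pmf])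

lemma UNIV_S: "UNIV \<in> sets (index_space :: 'n::finite stream measure)"
  by (metis sets.top space_S)

lemma single_lemma:
  fixes U :: "'n::finite list"
  shows "emeasure index_space {\<omega>\<in>space index_space. stake (length U) \<omega> \<in> {U} \<and> sdrop (length U) \<omega> \<in> UNIV}
    = ennreal ((1 / real CARD('n)) ^ length U)"
proof (induction U)
  case Nil
  have "emeasure (index_space :: 'n stream measure) UNIV = 1" using prob_space.emeasure_space_1[OF S_prob] by simp
  then show ?case by simp
next
  case (Cons u us)
  let ?M = "measure_pmf (pmf_of_set (UNIV :: 'n set))"
  let ?E = "emeasure index_space {\<omega>\<in>space index_space. stake (length us) \<omega> \<in> {us} \<and> sdrop (length us) \<omega> \<in> UNIV}"
  have "emeasure index_space {\<omega>\<in>space index_space. stake (length (u # us)) \<omega> \<in> {u # us} \<and> sdrop (length (u # us)) \<omega> \<in> UNIV}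
    = (\<integral>\<^sup>+t. emeasure index_space {x\<in>space index_space. t ## x \<in> {\<omega>\<in>space index_space. stake (length (u # us)) \<omega> \<in> {u # us} \<and> sdrop (length (u # us)) \<omega> \<in> UNIV}} \<partial>?M)"
    by (rule e_lemma, rule stake_meas, rule UNIV_S)
  also have "\<dots> = (\<integral>\<^sup>+t. ?E * indicator {u} t \<partial>?M)"
  proof (rule nn_integral_cong)
    fix t
    show "emeasure index_space {x\<in>space index_space. t ## x \<in> {\<omega>\<in>space index_space. stake (length (u # us)) \<omega> \<in> {u # us} \<and> sdrop (length (u # us)) \<omega> \<in> UNIV}} = ?E * indicator {u} t"
      by (cases "t = u") auto
  qed
  also have "\<dots> = ?E * emeasure ?M {u}"
    by (rule nn_integral_cmult_indicator) simp
  also have "emeasure ?M {u} = ennreal (1 / real CARD('n))"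
    by (simp add: emeasure_pmf_single)
  finally show ?case using Cons.IH by (simp add: ennreal_mult'[symmetric] mult.commute)
qed


fun Fset :: "'n::finite list \<Rightarrow> nat \<Rightarrow> 'n stream set" where
  "Fset U 0 = UNIV"
| "Fset U (Suc m) = {\<omega>\<in>space (index_space :: 'n stream measure). stake (length U) \<omega> \<in> UNIV - {U} \<and> sdrop (length U) \<omega> \<in> Fset U m}"

lemma Fset_sets: "Fset U m \<in> sets index_space"
proof (induction m)
  case 0 then show ?case by (simp add: UNIV_S)
next
  case (Suc m) then show ?case by (simp only: Fset.simps) (rule stake_meas)
qed

lemma Fset_measure:
  fixes U :: "'n::finite list"
  shows "measure index_space (Fset U m) = (1 - (1 / real CARD('n)) ^ length U) ^ m"
proof (induction m)
  case 0
  have "measure (index_space :: 'n stream measure) UNIV = 1"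
    using prob_space.prob_space[OF S_prob] by simp
  then show ?case by simp
next
  case (Suc m)
  let ?L = "length U"
  let ?A = "{\<omega>\<in>space (index_space :: 'n stream measure). stake ?L \<omega> \<in> UNIV - {U} \<and> sdrop ?L \<omega> \<in> UNIV}"
  let ?B = "{\<omega>\<in>space (index_space :: 'n stream measure). stake ?L \<omega> \<in> {U} \<and> sdrop ?L \<omega> \<in> UNIV}"
  have "emeasure index_space (Fset U (Suc m)) = emeasure index_space ?A * emeasure index_space (Fset U m)"
    by (simp only: Fset.simps) (rule prod_lemma[OF Fset_sets])
  then have 1: "measure index_space (Fset U (Suc m)) = measure index_space ?A * measure index_space (Fset U m)"
    by (simp add: measure_def enn2real_mult)
  have "?A = space index_space - ?B" by auto
  moreover have Bs: "?B \<in> sets index_space" by (rule stake_meas[OF UNIV_S])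
  ultimately have "measure index_space ?A = 1 - measure index_space ?B"
    using prob_space.prob_compl[OF S_prob Bs] by simp
  moreover have "measure index_space ?B = (1 / real CARD('n)) ^ ?L"
    using single_lemma[of U] by (simp add: measure_def)
  ultimately show ?case using 1 Suc.IH by simp
qed

lemma Fset_mem:
  fixes U :: "'n::finite list"
  shows "(\<forall>t. stake (length U) (sdrop t \<omega>) \<noteq> U) \<Longrightarrow> \<omega> \<in> Fset U m"
proof (induction m arbitrary: \<omega>)
  case 0 then show ?case by simp
next
  case (Suc m)
  have "stake (length U) \<omega> \<noteq> U" using Suc.prems[rule_format, of 0] by simp
  moreover have "sdrop (length U) \<omega> \<in> Fset U m"
  proof (rule Suc.IH, intro allI)
    fix t show "stake (length U) (sdrop t (sdrop (length U) \<omega>)) \<noteq> U"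
      using Suc.prems[rule_format, of "length U + t"] by simp
  qed
  ultimately show ?case by simp
qed

lemma word_appears:
  fixes U :: "'n::finite list"
  shows "AE \<omega> in (index_space :: 'n stream measure). \<exists>t. stake (length U) (sdrop t \<omega>) = U"
proof -
  interpret S: prob_space "index_space :: 'n stream measure" by (rule S_prob)
  define N where "N = (\<Inter>m. Fset U m)"
  define r where "r = 1 - (1 / real CARD('n)) ^ length U"
  have Nsets: "N \<in> sets index_space" unfolding N_def
    by (intro sets.countable_INT') (auto intro: Fset_sets)
  have qpos: "(1 / real CARD('n)) ^ length U > 0" by simp
  have qle: "(1 / real CARD('n)) ^ length U \<le> 1"
    by (intro power_le_one) (auto simp: field_simps)
  have r: "0 \<le> r" "r < 1" using qpos qle by (auto simp: r_def)
  have le: "measure index_space N \<le> r ^ m" for m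
  proof -
    have "measure index_space N \<le> measure index_space (Fset U m)"
      by (rule S.finite_measure_mono) (auto simp: N_def intro: Fset_sets)
    then show ?thesis by (simp add: Fset_measure r_def)
  qed
  have lim: "(\<lambda>m. r ^ m) \<longlonglongrightarrow> 0" using r by (intro LIMSEQ_power_zero) simp
  have "measure index_space N \<le> 0"
    using LIMSEQ_le_const[OF lim, of "measure index_space N"] le by blast
  then have "measure index_space N = 0" by (simp add: measure_nonneg antisym)
  then have "N \<in> null_sets index_space"
    using Nsets S.emeasure_eq_measure[of N] by (simp add: null_sets_def)
  moreover have "{\<omega>\<in>space index_space. \<not> (\<exists>t. stake (length U) (sdrop t \<omega>) = U)} \<subseteq> N"
    unfolding N_def using Fset_mem by blast
  ultimately show ?thesis by (rule AE_I')
qed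


theorem mainTheorem8:
  fixes W :: "'n::finite \<Rightarrow> 'n \<Rightarrow> real" and x0 :: "'n \<Rightarrow> real"
  assumes "row_stochastic W"
    and "\<forall>M. M \<noteq> {} \<and> maximal_cohesive W M \<longrightarrow> M = UNIV"
  shows "AE \<omega> in (index_space :: 'n stream measure).
           \<exists>T c. \<forall>t\<ge>T. \<forall>i. traj W x0 \<omega> t i = c"
proof -
  have rs: "row_stochastic W" using assms(1) .
  obtain U where U: "\<forall>x\<in>{x. range x \<subseteq> range x0}. cons (run W x U)"
    using universal[OF assms(1) assms(2) finite_states[of "range x0"]] by auto
  show ?thesis
    using word_appears[of U]
  proof (rule eventually_mono)
    fix \<omega> assume "\<exists>t. stake (length U) (sdrop t \<omega>) = U"
    then obtain t where t: "stake (length U) (sdrop t \<omega>) = U" by blast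
    define y where "y = traj W x0 \<omega> (t + length U)"
    have y: "y = run W (traj W x0 \<omega> t) U" unfolding y_def traj_run t ..
    have "cons y" using U traj_range[OF rs, of x0 \<omega> t] y by blast
    then obtain c where c: "\<forall>i. y i = c" by (auto simp: cons_def)
    have "\<forall>s\<ge>t + length U. \<forall>i. traj W x0 \<omega> s i = c"
    proof (intro allI impI)
      fix s i assume s: "s \<ge> t + length U"
      have "traj W x0 \<omega> s = traj W x0 \<omega> ((t + length U) + (s - (t + length U)))"
        using s by simp
      also have "\<dots> = run W y (stake (s - (t + length U)) (sdrop (t + length U) \<omega>))"
        unfolding y_def by (rule traj_run)
      also have "\<dots> = y" by (rule run_cons[OF rs \<open>cons y\<close>])
      finally show "traj W x0 \<omega> s i = c" using c by simp
    qed
    then show "\<exists>T c. \<forall>t\<ge>T. \<forall>i. traj W x0 \<omega> t i = c" by blast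
  qed
qed

end
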